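(* Let $p\in[1,\infty)$ and $\zeta\in M_p^{n-1}$. If $u_k,u\in\mathrm{Conv}_{\mathrm{coe}}^{(n)}(\mathbb{R}^n)$ are such that $\delta_{\zeta,p}(u_k,u)\to 0$, then $u_k(x_0)\to u(x_0)$ as $k\to\infty$ for every $x_0\in\mathrm{int}\,\mathrm{dom}\,u$.
   Context: $\mathrm{Conv}_{\mathrm{coe}}^{(n)}(\mathbb{R}^n)$ is the set of proper, lower semicontinuous, convex, coercive $u:\mathbb{R}^n\to\mathbb{R}\cup\{+\infty\}$ with $\mathrm{dom}\,u=\{u<+\infty\}$ of dimension $n$. $M_p^{n-1}$ is the set of continuous, strictly decreasing $\zeta:\mathbb{R}\to(0,\infty)$ with $\int_0^\infty\zeta(t)^pt^{n-1}dt<\infty$. $\delta_{\zeta,p}(u,v)=\left(\int_{\mathbb{R}^n}|\zeta(u(x))-\zeta(v(x))|^pdx\right)^{1/p}$ with $\zeta(+\infty):=0$. *)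

theory Defs
  imports "HOL-Analysis.Analysis"
begin

text \<open>Functions R^n -> R \<union> {+\<infinity>} are modelled as maps into ereal never taking the value -\<infinity>;
  the dimension n is DIM('a) for a Euclidean space 'a.\<close>

definition edom :: "('a \<Rightarrow> ereal) \<Rightarrow> 'a set" where
  "edom u = {x. u x < \<infinity>}"

definition proper_fun :: "('a \<Rightarrow> ereal) \<Rightarrow> bool" where
  "proper_fun u \<longleftrightarrow> (\<forall>x. u x \<noteq> -\<infinity>) \<and> (\<exists>x. u x < \<infinity>)"

definition lsc_fun :: "('a::topological_space \<Rightarrow> ereal) \<Rightarrow> bool" where
  "lsc_fun u \<longleftrightarrow> (\<forall>x. u x \<le> Liminf (at x) u)"

definition convex_efun :: "('a::real_vector \<Rightarrow> ereal) \<Rightarrow> bool" where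
  "convex_efun u \<longleftrightarrow> (\<forall>x y t. 0 \<le> t \<and> t \<le> 1 \<longrightarrow>
      u ((1 - t) *\<^sub>R x + t *\<^sub>R y) \<le> ereal (1 - t) * u x + ereal t * u y)"

definition coercive_fun :: "('a::real_normed_vector \<Rightarrow> ereal) \<Rightarrow> bool" where
  "coercive_fun u \<longleftrightarrow> filterlim u at_top at_infinity"

definition Conv_coe_n :: "('a::euclidean_space \<Rightarrow> ereal) set" where
  "Conv_coe_n = {u. proper_fun u \<and> lsc_fun u \<and> convex_efun u \<and> coercive_fun u
                    \<and> aff_dim (edom u) = int DIM('a)}"

definition M_p :: "real \<Rightarrow> nat \<Rightarrow> (real \<Rightarrow> real) set" where
  "M_p p m = {\<zeta>. continuous_on UNIV \<zeta> \<and> (\<forall>t. 0 < \<zeta> t)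
                  \<and> (\<forall>s t. s < t \<longrightarrow> \<zeta> t < \<zeta> s)
                  \<and> (\<integral>\<^sup>+ t. ennreal (indicator {0..} t * (\<zeta> t powr p * t ^ m)) \<partial>lborel) < \<infinity>}"

text \<open>\<zeta> extended by \<zeta>(+\<infinity>) = 0 (value at -\<infinity> irrelevant, set to 0).\<close>
definition zeta_ext :: "(real \<Rightarrow> real) \<Rightarrow> ereal \<Rightarrow> real" where
  "zeta_ext \<zeta> a = (case a of ereal t \<Rightarrow> \<zeta> t | _ \<Rightarrow> 0)"

definition delta_zeta :: "(real \<Rightarrow> real) \<Rightarrow> real \<Rightarrow> ('a::euclidean_space \<Rightarrow> ereal) \<Rightarrow> ('a \<Rightarrow> ereal) \<Rightarrow> ennreal" where
  "delta_zeta \<zeta> p u v =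
     (let I = (\<integral>\<^sup>+ x. ennreal (\<bar>zeta_ext \<zeta> (u x) - zeta_ext \<zeta> (v x)\<bar> powr p) \<partial>lborel)
      in if I = \<infinity> then \<infinity> else ennreal (enn2real I powr (1 / p)))"

end

theory Submission
  imports Defs
begin

lemma lsc_open:
  fixes u :: "'a::topological_space \<Rightarrow> ereal"
  assumes "lsc_fun u" shows "open {x. c < u x}"
  unfolding open_subopen[of "{x. c < u x}"]
proof (intro ballI)
  fix x assume "x \<in> {x. c < u x}"
  then have "c < Liminf (at x) u" using assms unfolding lsc_fun_def
    by (meson less_le_trans mem_Collect_eq)
  then have "eventually (\<lambda>y. c < u y) (at x)" by (rule less_LiminfD)
  then obtain S where S: "open S" "x \<in> S" "\<forall>y\<in>S. y \<noteq> x \<longrightarrow> c < u y"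
    unfolding eventually_at_topological by blast
  show "\<exists>T. open T \<and> x \<in> T \<and> T \<subseteq> {x. c < u x}"
    using S \<open>x \<in> {x. c < u x}\<close> by (intro exI[of _ S]) auto
qed

lemma lsc_closed:
  fixes u :: "'a::topological_space \<Rightarrow> ereal"
  assumes "lsc_fun u" shows "closed {x. u x \<le> c}"
proof -
  have "{x. u x \<le> c} = - {x. c < u x}" by auto
  then show ?thesis using lsc_open[OF assms] by (simp add: closed_def)
qed

lemma mid:
  assumes "convex_efun u" "u x \<le> ereal A" "u y \<le> ereal B"
  shows "u ((1/2) *\<^sub>R x + (1/2) *\<^sub>R y) \<le> ereal ((A+B)/2)"
proof -
  have "u ((1 - 1/2) *\<^sub>R x + (1/2) *\<^sub>R y) \<le> ereal (1 - 1/2) * u x + ereal (1/2) * u y"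
  proof -
    have "0 \<le> (1/2::real) \<and> (1/2::real) \<le> 1" by simp
    then show ?thesis using assms(1) unfolding convex_efun_def by blast
  qed
  also have "\<dots> \<le> ereal (1 - 1/2) * ereal A + ereal (1/2) * ereal B"
    by (intro add_mono ereal_mult_left_mono[OF assms(2)] ereal_mult_left_mono[OF assms(3)]) auto
  also have "\<dots> = ereal ((A+B)/2)" by (simp add: field_simps)
  finally show ?thesis by simp
qed

lemma affine_meas:
  fixes A :: "'a::euclidean_space set" and c :: real
  assumes "c \<noteq> 0" "A \<in> sets borel"
  shows "emeasure lborel A = ennreal (\<bar>c\<bar>^DIM('a)) * emeasure lborel ((\<lambda>x. t + c *\<^sub>R x) -` A)"
proof -
  have "emeasure lborel A = emeasure (density (distr lborel borel (\<lambda>x. t + c *\<^sub>R x)) (\<lambda>_. \<bar>c\<bar>^DIM('a))) A"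
    using lborel_affine[OF assms(1), of t] by simp
  also have "\<dots> = ennreal (\<bar>c\<bar>^DIM('a)) * emeasure (distr lborel borel (\<lambda>x. t + c *\<^sub>R x)) A"
    using assms by (subst emeasure_density_const) auto
  also have "\<dots> = ennreal (\<bar>c\<bar>^DIM('a)) * emeasure lborel ((\<lambda>x. t + c *\<^sub>R x) -` A)"
    using assms by (subst emeasure_distr) auto
  finally show ?thesis .
qed

lemma edom_finite:
  assumes "proper_fun u" "y \<in> edom u"
  shows "u y = ereal (real_of_ereal (u y))"
  using assms unfolding proper_fun_def edom_def by (cases "u y") auto

lemma convex_edom:
  fixes u :: "'a::euclidean_space \<Rightarrow> ereal"
  assumes "proper_fun u" "convex_efun u"
  shows "convex (edom u)"
  unfolding convex_def
proof (intro ballI allI impI)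
  fix x y and a b :: real assume xy: "x \<in> edom u" "y \<in> edom u" and ab: "0 \<le> a" "0 \<le> b" "a + b = 1"
  then have a: "a = 1 - b" by simp
  have "0 \<le> b \<and> b \<le> 1" using ab by simp
  then have "u ((1 - b) *\<^sub>R x + b *\<^sub>R y) \<le> ereal (1 - b) * u x + ereal b * u y"
    using assms(2) unfolding convex_efun_def by blast
  then have "u (a *\<^sub>R x + b *\<^sub>R y) \<le> ereal a * u x + ereal b * u y"
    unfolding a .
  also have "\<dots> = ereal (a * real_of_ereal (u x) + b * real_of_ereal (u y))"
  proof -
    obtain rx ry where "u x = ereal rx" "u y = ereal ry"
      using edom_finite[OF assms(1) xy(1)] edom_finite[OF assms(1) xy(2)] by metis
    then show ?thesis by simp
  qed
  finally have "u (a *\<^sub>R x + b *\<^sub>R y) < \<infinity>"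
    by (rule le_less_trans) simp
  then show "a *\<^sub>R x + b *\<^sub>R y \<in> edom u" unfolding edom_def by simp
qed

lemma convex_on_real:
  fixes u :: "'a::euclidean_space \<Rightarrow> ereal"
  assumes "proper_fun u" "convex_efun u"
  shows "convex_on (interior (edom u)) (\<lambda>x. real_of_ereal (u x))"
  unfolding convex_on_def
proof (intro conjI ballI allI impI)
  show "convex (interior (edom u))" by (rule convex_interior[OF convex_edom[OF assms]])
  fix x y and a b :: real assume xy': "x \<in> interior (edom u)" "y \<in> interior (edom u)" and ab: "0 \<le> a" "0 \<le> b" "a + b = 1"
  then have xy: "x \<in> edom u" "y \<in> edom u" using interior_subset by auto
  have z: "a *\<^sub>R x + b *\<^sub>R y \<in> edom u"
    using convex_edom[OF assms] xy ab unfolding convex_def by blast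
  then have a: "a = 1 - b" using ab by simp
  have "0 \<le> b \<and> b \<le> 1" using ab by simp
  then have "u ((1 - b) *\<^sub>R x + b *\<^sub>R y) \<le> ereal (1 - b) * u x + ereal b * u y"
    using assms(2) unfolding convex_efun_def by blast
  then have "u (a *\<^sub>R x + b *\<^sub>R y) \<le> ereal a * u x + ereal b * u y"
    unfolding a .
  also have "\<dots> = ereal (a * real_of_ereal (u x) + b * real_of_ereal (u y))"
  proof -
    obtain rx ry where "u x = ereal rx" "u y = ereal ry"
      using edom_finite[OF assms(1) xy(1)] edom_finite[OF assms(1) xy(2)] by metis
    then show ?thesis by simp
  qed
  finally show "real_of_ereal (u (a *\<^sub>R x + b *\<^sub>R y)) \<le> a * real_of_ereal (u x) + b * real_of_ereal (u y)"
    by (subst (asm) edom_finite[OF assms(1) z]) simp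
qed

lemma cont_ball:
  fixes u :: "'a::euclidean_space \<Rightarrow> ereal"
  assumes "proper_fun u" "convex_efun u" "x0 \<in> interior (edom u)" "e > 0"
  shows "\<exists>r>0. ball x0 r \<subseteq> interior (edom u) \<and>
     (\<forall>y\<in>ball x0 r. \<bar>real_of_ereal (u y) - real_of_ereal (u x0)\<bar> < e)"
proof -
  have "continuous_on (interior (edom u)) (\<lambda>x. real_of_ereal (u x))"
    by (rule convex_on_continuous[OF open_interior convex_on_real[OF assms(1,2)]])
  then obtain d where d: "d > 0" "\<forall>x'\<in>interior (edom u). dist x' x0 < d \<longrightarrow>
      dist (real_of_ereal (u x')) (real_of_ereal (u x0)) < e"
    using assms(3,4) unfolding continuous_on_iff by blast
  obtain r0 where r0: "r0 > 0" "ball x0 r0 \<subseteq> interior (edom u)"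
    using assms(3) open_interior open_contains_ball by blast
  show ?thesis
  proof (intro exI[of _ "min d r0"] conjI ballI)
    show "0 < min d r0" using d r0 by simp
    show "ball x0 (min d r0) \<subseteq> interior (edom u)" using r0 by auto
    fix y assume "y \<in> ball x0 (min d r0)"
    then show "\<bar>real_of_ereal (u y) - real_of_ereal (u x0)\<bar> < e"
    proof -
      assume y: "y \<in> ball x0 (min d r0)"
      then have "y \<in> interior (edom u)" "dist y x0 < d" using r0 by (auto simp: dist_commute)
      then show ?thesis using d(2) by (simp add: dist_real_def)
    qed
  qed
qed

definition Iz :: "(real \<Rightarrow> real) \<Rightarrow> real \<Rightarrow> ('a::euclidean_space \<Rightarrow> ereal) \<Rightarrow> ('a \<Rightarrow> ereal) \<Rightarrow> ennreal" where
  "Iz \<zeta> p v u = (\<integral>\<^sup>+ x. ennreal (\<bar>zeta_ext \<zeta> (v x) - zeta_ext \<zeta> (u x)\<bar> powr p) \<partial>lborel)"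

lemma delta_small:
  fixes uk :: "nat \<Rightarrow> 'a::euclidean_space \<Rightarrow> ereal"
  assumes "(\<lambda>k. delta_zeta \<zeta> p (uk k) u) \<longlonglongrightarrow> 0" "1 \<le> p" "0 < m"
  shows "eventually (\<lambda>k. Iz \<zeta> p (uk k) u < ennreal m) sequentially"
proof -
  have "0 < ennreal (m powr (1/p))" using assms(3) by simp
  then have ev: "eventually (\<lambda>k. delta_zeta \<zeta> p (uk k) u < ennreal (m powr (1/p))) sequentially"
    using order_tendstoD(2)[OF assms(1)] by blast
  show ?thesis
  proof (rule eventually_mono[OF ev])
    fix k assume lt: "delta_zeta \<zeta> p (uk k) u < ennreal (m powr (1/p))"
    define I where "I = Iz \<zeta> p (uk k) u"
    have dz: "delta_zeta \<zeta> p (uk k) u = (if I = \<infinity> then \<infinity> else ennreal (enn2real I powr (1 / p)))"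
      unfolding delta_zeta_def I_def Iz_def Let_def by simp
    have fin: "I \<noteq> \<infinity>" using lt dz by (auto split: if_splits)
    show "Iz \<zeta> p (uk k) u < ennreal m"
    proof (rule ccontr)
      assume "\<not> Iz \<zeta> p (uk k) u < ennreal m"
      then have "ennreal m \<le> ennreal (enn2real I)" using fin unfolding I_def
        by (simp add: not_less ennreal_enn2real_if)
      then have "m \<le> enn2real I" by (simp add: ennreal_le_iff)
      then have "m powr (1/p) \<le> enn2real I powr (1/p)"
        using assms(2,3) by (intro powr_mono2) auto
      then have "ennreal (m powr (1/p)) \<le> delta_zeta \<zeta> p (uk k) u"
        using fin dz by (simp add: ennreal_leI)
      then show False using lt by simp
    qed
  qed
qed

lemma lower_bound:
  fixes v u :: "'a::euclidean_space \<Rightarrow> ereal"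
  assumes "S \<in> sets lborel" "0 \<le> \<eta>" "0 < p"
    "\<And>x. x \<in> S \<Longrightarrow> \<eta> \<le> \<bar>zeta_ext \<zeta> (v x) - zeta_ext \<zeta> (u x)\<bar>"
  shows "ennreal (\<eta> powr p) * emeasure lborel S \<le> Iz \<zeta> p v u"
proof -
  have "ennreal (\<eta> powr p) * emeasure lborel S = (\<integral>\<^sup>+ x. ennreal (\<eta> powr p) * indicator S x \<partial>lborel)"
    using assms(1) by (simp add: nn_integral_cmult_indicator)
  also have "\<dots> \<le> Iz \<zeta> p v u" unfolding Iz_def
  proof (rule nn_integral_mono)
    fix x
    show "ennreal (\<eta> powr p) * indicator S x \<le> ennreal (\<bar>zeta_ext \<zeta> (v x) - zeta_ext \<zeta> (u x)\<bar> powr p)"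
    proof (cases "x \<in> S")
      case True
      then have "\<eta> powr p \<le> \<bar>zeta_ext \<zeta> (v x) - zeta_ext \<zeta> (u x)\<bar> powr p"
        using assms by (intro powr_mono2) auto
      then show ?thesis using True by (simp add: ennreal_leI)
    qed simp
  qed
  finally show ?thesis .
qed

lemma final_bound:
  fixes v u :: "'a::euclidean_space \<Rightarrow> ereal"
  assumes "S \<in> sets lborel" "emeasure lborel S < \<infinity>" "ennreal W \<le> 2 * emeasure lborel S"
    "0 \<le> W" "0 \<le> \<eta>" "0 < p"
    "\<And>x. x \<in> S \<Longrightarrow> \<eta> \<le> \<bar>zeta_ext \<zeta> (v x) - zeta_ext \<zeta> (u x)\<bar>"
  shows "ennreal (\<eta> powr p * (W / 2)) \<le> Iz \<zeta> p v u"
proof -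
  have eS: "emeasure lborel S = ennreal (measure lborel S)"
    using assms(2) by (simp add: emeasure_eq_ennreal_measure)
  have "ennreal W \<le> ennreal (2 * measure lborel S)"
    using assms(3) unfolding eS by (simp add: ennreal_mult')
  then have "W \<le> 2 * measure lborel S" by (simp add: ennreal_le_iff)
  then have "\<eta> powr p * (W / 2) \<le> \<eta> powr p * measure lborel S"
    by (intro mult_left_mono) auto
  then have "ennreal (\<eta> powr p * (W / 2)) \<le> ennreal (\<eta> powr p) * emeasure lborel S"
    unfolding eS by (simp add: ennreal_mult'[symmetric] ennreal_leI)
  also have "\<dots> \<le> Iz \<zeta> p v u" by (rule lower_bound[OF assms(1,5,6,7)])
  finally show ?thesis .
qed

lemma zeta_gt:
  assumes "\<zeta> \<in> M_p p m" "ereal c < w"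
  shows "zeta_ext \<zeta> w \<le> \<zeta> c"
proof (cases w)
  case (real r) then show ?thesis using assms unfolding M_p_def zeta_ext_def by (auto intro: less_imp_le)
next
  case PInf then show ?thesis using assms unfolding M_p_def zeta_ext_def by (auto intro: less_imp_le)
next
  case MInf then show ?thesis using assms by simp
qed

lemma zeta_le:
  assumes "\<zeta> \<in> M_p p m" "w \<le> ereal c" "w \<noteq> -\<infinity>"
  shows "\<zeta> c \<le> zeta_ext \<zeta> w"
proof (cases w)
  case (real r) then show ?thesis using assms unfolding M_p_def zeta_ext_def
    by (cases "r = c") (auto intro: less_imp_le)
qed (use assms in auto)

lemma zeta_strict:
  assumes "\<zeta> \<in> M_p p m" "s < t"
  shows "\<zeta> t < \<zeta> s"
  using assms unfolding M_p_def by auto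

lemma conv_props:
  assumes "u \<in> Conv_coe_n"
  shows "proper_fun u" "lsc_fun u" "convex_efun u"
  using assms unfolding Conv_coe_n_def by auto

lemma case_up:
  fixes u :: "'a::euclidean_space \<Rightarrow> ereal"
  assumes "1 \<le> p" "\<zeta> \<in> M_p p m0" "u \<in> Conv_coe_n" "x0 \<in> interior (edom u)" "0 < \<epsilon>"
  shows "\<exists>m>0. \<forall>v. v \<in> Conv_coe_n \<longrightarrow> ereal (real_of_ereal (u x0) + \<epsilon>) \<le> v x0 \<longrightarrow>
            ennreal m \<le> Iz \<zeta> p v u"
proof -
  define a where "a = real_of_ereal (u x0)"
  note up = conv_props[OF assms(3)]
  obtain r where r: "r > 0" "ball x0 r \<subseteq> interior (edom u)"
    "\<forall>y\<in>ball x0 r. \<bar>real_of_ereal (u y) - a\<bar> < \<epsilon>/4"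
    using cont_ball[OF up(1) up(3) assms(4), of "\<epsilon>/4"] assms(5) unfolding a_def by auto
  define B where "B = ball x0 r"
  define \<eta> where "\<eta> = \<zeta> (a + \<epsilon>/4) - \<zeta> (a + \<epsilon>/2)"
  define V where "V = measure lborel B"
  have \<eta>pos: "0 < \<eta>" unfolding \<eta>_def using zeta_strict[OF assms(2), of "a + \<epsilon>/4" "a + \<epsilon>/2"] assms(5) by simp
  have Vpos: "0 < V" unfolding V_def B_def using r(1) by simp
  have p0: "0 < p" using assms(1) by simp
  show ?thesis
  proof (intro exI[of _ "\<eta> powr p * (V / 2)"] conjI allI impI)
    show "0 < \<eta> powr p * (V / 2)" using \<eta>pos Vpos by simp
    fix v :: "'a \<Rightarrow> ereal" assume v: "v \<in> Conv_coe_n" and vx0: "ereal (real_of_ereal (u x0) + \<epsilon>) \<le> v x0"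
    note vp = conv_props[OF v]
    define S where "S = B \<inter> {x. ereal (a + \<epsilon>/2) < v x}"
    have Sopen: "open S" unfolding S_def B_def by (intro open_Int lsc_open[OF vp(2)]) simp
    then have Smeas: "S \<in> sets lborel" by simp
    define R where "R = (\<lambda>x::'a. (2 *\<^sub>R x0) + (-1) *\<^sub>R x)"
    have RS_open: "open (R -` S)" unfolding R_def
      by (intro continuous_open_vimage Sopen) (auto intro!: continuous_intros)
    have cover: "B \<subseteq> S \<union> R -` S"
    proof
      fix y assume y: "y \<in> B"
      have e: "x0 - (2 *\<^sub>R x0 + (-1) *\<^sub>R y) = -(x0 - y)" by (simp add: algebra_simps scaleR_2)
      have Ry: "R y \<in> B" using y unfolding B_def R_def mem_ball dist_norm e norm_minus_cancel .
      show "y \<in> S \<union> R -` S"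
      proof (rule ccontr)
        assume "y \<notin> S \<union> R -` S"
        then have "v y \<le> ereal (a + \<epsilon>/2)" "v (R y) \<le> ereal (a + \<epsilon>/2)"
          using y Ry unfolding S_def by auto
        from mid[OF vp(3) this] have "v ((1/2) *\<^sub>R y + (1/2) *\<^sub>R R y) \<le> ereal (a + \<epsilon>/2)"
          by (simp add: add_divide_distrib)
        moreover have "(1/2) *\<^sub>R y + (1/2) *\<^sub>R R y = x0" unfolding R_def by (simp add: algebra_simps)
        ultimately have "v x0 \<le> ereal (a + \<epsilon>/2)" by simp
        from order_trans[OF vx0 this] assms(5) show False unfolding a_def by simp
      qed
    qed
    have "emeasure lborel B \<le> emeasure lborel (S \<union> R -` S)"
      using cover by (intro emeasure_mono) (use Smeas RS_open in auto)
    also have "\<dots> \<le> emeasure lborel S + emeasure lborel (R -` S)"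
      by (intro emeasure_subadditive) (use Smeas RS_open in auto)
    also have "emeasure lborel (R -` S) = emeasure lborel S"
      using affine_meas[of "-1" S "2 *\<^sub>R x0"] Smeas unfolding R_def by simp
    finally have cov2: "emeasure lborel B \<le> 2 * emeasure lborel S"
      by (simp add: mult_2)
    have Sfin: "emeasure lborel S < \<infinity>"
      using emeasure_mono[of S B lborel] emeasure_lborel_ball_finite[of x0 r]
      unfolding S_def B_def by (auto simp: top.extremum_strict)
    have eB: "emeasure lborel B = ennreal V"
      unfolding V_def B_def using emeasure_lborel_ball_finite[of x0 r]
      by (simp add: emeasure_eq_ennreal_measure)
    show "ennreal (\<eta> powr p * (V / 2)) \<le> Iz \<zeta> p v u"
    proof (rule final_bound[OF Smeas Sfin _ _ _ p0])
      show "ennreal V \<le> 2 * emeasure lborel S" using cov2 eB by simp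
      show "0 \<le> V" using Vpos by simp
      show "0 \<le> \<eta>" using \<eta>pos by simp
      fix x assume x: "x \<in> S"
      then have xB: "x \<in> B" and vx: "ereal (a + \<epsilon>/2) < v x" unfolding S_def by auto
      have xd: "x \<in> edom u" using xB r(2) interior_subset unfolding B_def by blast
      have ux: "u x = ereal (real_of_ereal (u x))" by (rule edom_finite[OF up(1) xd])
      have "\<bar>real_of_ereal (u x) - a\<bar> < \<epsilon>/4" using r(3) xB unfolding B_def by blast
      then have gx: "real_of_ereal (u x) < a + \<epsilon>/4" by linarith
      have "zeta_ext \<zeta> (u x) = \<zeta> (real_of_ereal (u x))"
        by (subst ux) (simp add: zeta_ext_def)
      also have "\<dots> > \<zeta> (a + \<epsilon>/4)" by (rule zeta_strict[OF assms(2) gx])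
      finally have "\<zeta> (a + \<epsilon>/4) < zeta_ext \<zeta> (u x)" .
      moreover have "zeta_ext \<zeta> (v x) \<le> \<zeta> (a + \<epsilon>/2)" by (rule zeta_gt[OF assms(2) vx])
      ultimately show "\<eta> \<le> \<bar>zeta_ext \<zeta> (v x) - zeta_ext \<zeta> (u x)\<bar>" unfolding \<eta>_def by linarith
    qed
  qed
qed

lemma case_down:
  fixes u :: "'a::euclidean_space \<Rightarrow> ereal"
  assumes "1 \<le> p" "\<zeta> \<in> M_p p m0" "u \<in> Conv_coe_n" "x0 \<in> interior (edom u)" "0 < \<epsilon>"
  shows "\<exists>m>0. \<forall>v. v \<in> Conv_coe_n \<longrightarrow> v x0 \<le> ereal (real_of_ereal (u x0) - \<epsilon>) \<longrightarrow>
            ennreal m \<le> Iz \<zeta> p v u"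
proof -
  define a where "a = real_of_ereal (u x0)"
  note up = conv_props[OF assms(3)]
  obtain r where r: "r > 0" "ball x0 r \<subseteq> interior (edom u)"
    "\<forall>y\<in>ball x0 r. \<bar>real_of_ereal (u y) - a\<bar> < \<epsilon>/8"
    using cont_ball[OF up(1) up(3) assms(4), of "\<epsilon>/8"] assms(5) unfolding a_def by auto
  define B where "B = ball x0 r"
  define B2 where "B2 = ball x0 (r/2)"
  define M where "M = a + \<epsilon>/2"
  define \<eta> where "\<eta> = min (\<zeta> (a + \<epsilon>/8) - \<zeta> (a + \<epsilon>/2)) (\<zeta> (a - \<epsilon>/4) - \<zeta> (a - \<epsilon>/8))"
  define V where "V = measure lborel B2"
  have \<eta>pos: "0 < \<eta>" unfolding \<eta>_def
    using zeta_strict[OF assms(2), of "a + \<epsilon>/8" "a + \<epsilon>/2"] zeta_strict[OF assms(2), of "a - \<epsilon>/4" "a - \<epsilon>/8"] assms(5) by simp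
  have Vpos: "0 < V" unfolding V_def B2_def using r(1) by simp
  have p0: "0 < p" using assms(1) by simp
  show ?thesis
  proof (intro exI[of _ "\<eta> powr p * (V / 2)"] conjI allI impI)
    show "0 < \<eta> powr p * (V / 2)" using \<eta>pos Vpos by simp
    fix v :: "'a \<Rightarrow> ereal" assume v: "v \<in> Conv_coe_n" and vx0: "v x0 \<le> ereal (real_of_ereal (u x0) - \<epsilon>)"
    note vp = conv_props[OF v]
    define Bad where "Bad = B \<inter> {x. ereal M < v x}"
    define Good where "Good = B2 \<inter> {x. v x \<le> ereal (a - \<epsilon>/4)}"
    define S where "S = Good \<union> Bad"
    have Badopen: "open Bad" unfolding Bad_def B_def by (intro open_Int lsc_open[OF vp(2)]) simp
    then have Badmeas: "Bad \<in> sets lborel" by simp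
    have Goodmeas: "Good \<in> sets lborel" unfolding Good_def B2_def
      using lsc_closed[OF vp(2), of "ereal (a - \<epsilon>/4)"] by (intro sets.Int) auto
    have Smeas: "S \<in> sets lborel" unfolding S_def using Badmeas Goodmeas by simp
    define T where "T = (\<lambda>x::'a. (- x0) + 2 *\<^sub>R x)"
    have TB_open: "open (T -` Bad)" unfolding T_def
      by (intro continuous_open_vimage Badopen) (auto intro!: continuous_intros)
    have cover: "B2 \<subseteq> Good \<union> T -` Bad"
    proof
      fix z assume z: "z \<in> B2"
      have e: "x0 - (- x0 + 2 *\<^sub>R z) = 2 *\<^sub>R (x0 - z)" by (simp add: algebra_simps scaleR_2)
      have Tz: "T z \<in> B" using z unfolding B_def B2_def T_def mem_ball dist_norm e by simp
      have zB: "z \<in> B" using z r(1) unfolding B_def B2_def by auto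
      show "z \<in> Good \<union> T -` Bad"
      proof (rule ccontr)
        assume nz: "z \<notin> Good \<union> T -` Bad"
        then have "v (T z) \<le> ereal M" using Tz unfolding Bad_def by auto
        from mid[OF vp(3) vx0 this] have "v ((1/2) *\<^sub>R x0 + (1/2) *\<^sub>R T z) \<le> ereal ((real_of_ereal (u x0) - \<epsilon> + M) / 2)" .
        moreover have "(1/2) *\<^sub>R x0 + (1/2) *\<^sub>R T z = z" unfolding T_def by (simp add: algebra_simps)
        moreover have "(real_of_ereal (u x0) - \<epsilon> + M) / 2 = a - \<epsilon>/4" unfolding M_def a_def by simp
        ultimately have "v z \<le> ereal (a - \<epsilon>/4)" by simp
        with z nz show False unfolding Good_def by auto
      qed
    qed
    have "emeasure lborel B2 \<le> emeasure lborel (Good \<union> T -` Bad)"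
      using cover by (intro emeasure_mono) (use Goodmeas TB_open in auto)
    also have "\<dots> \<le> emeasure lborel Good + emeasure lborel (T -` Bad)"
      by (intro emeasure_subadditive) (use Goodmeas TB_open in auto)
    also have "emeasure lborel (T -` Bad) \<le> emeasure lborel Bad"
    proof -
      have "emeasure lborel Bad = ennreal (\<bar>2\<bar>^DIM('a)) * emeasure lborel (T -` Bad)"
        using affine_meas[of 2 Bad "- x0"] Badmeas unfolding T_def by simp
      moreover have "1 \<le> ennreal (\<bar>2::real\<bar>^DIM('a))" by (simp add: ennreal_1[symmetric] del: ennreal_1)
      ultimately show ?thesis
        by (metis mult_1 mult_right_mono zero_le)
    qed
    also have "emeasure lborel Good + emeasure lborel Bad \<le> 2 * emeasure lborel S"
    proof -
      have "emeasure lborel Good \<le> emeasure lborel S" "emeasure lborel Bad \<le> emeasure lborel S"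
        unfolding S_def using Smeas by (auto intro!: emeasure_mono simp: S_def)
      then show ?thesis by (simp add: mult_2 add_mono)
    qed
    finally have cov2: "emeasure lborel B2 \<le> 2 * emeasure lborel S" by - (simp add: add_left_mono)
    have "S \<subseteq> B" unfolding S_def Good_def Bad_def B_def B2_def using r(1) by auto
    then have Sfin: "emeasure lborel S < \<infinity>"
      using emeasure_mono[of S B lborel] emeasure_lborel_ball_finite[of x0 r]
      unfolding B_def by (auto simp: top.extremum_strict)
    have eB: "emeasure lborel B2 = ennreal V"
      unfolding V_def B2_def using emeasure_lborel_ball_finite[of x0 "r/2"]
      by (simp add: emeasure_eq_ennreal_measure)
    show "ennreal (\<eta> powr p * (V / 2)) \<le> Iz \<zeta> p v u"
    proof (rule final_bound[OF Smeas Sfin _ _ _ p0])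
      show "ennreal V \<le> 2 * emeasure lborel S" using cov2 eB by simp
      show "0 \<le> V" using Vpos by simp
      show "0 \<le> \<eta>" using \<eta>pos by simp
      fix x assume x: "x \<in> S"
      then have xB: "x \<in> B" using r(1) unfolding S_def Good_def Bad_def B_def B2_def by auto
      have xd: "x \<in> edom u" using xB r(2) interior_subset unfolding B_def by blast
      have ux: "u x = ereal (real_of_ereal (u x))" by (rule edom_finite[OF up(1) xd])
      have gx: "\<bar>real_of_ereal (u x) - a\<bar> < \<epsilon>/8" using r(3) xB unfolding B_def by blast
      have zu: "zeta_ext \<zeta> (u x) = \<zeta> (real_of_ereal (u x))"
        by (subst ux) (simp add: zeta_ext_def)
      show "\<eta> \<le> \<bar>zeta_ext \<zeta> (v x) - zeta_ext \<zeta> (u x)\<bar>"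
      proof (cases "x \<in> Bad")
        case True
        then have vx: "ereal M < v x" unfolding Bad_def by auto
        have "real_of_ereal (u x) < a + \<epsilon>/8" using gx by linarith
        then have "\<zeta> (a + \<epsilon>/8) < zeta_ext \<zeta> (u x)" unfolding zu by (rule zeta_strict[OF assms(2)])
        moreover have "zeta_ext \<zeta> (v x) \<le> \<zeta> (a + \<epsilon>/2)" using zeta_gt[OF assms(2) vx] unfolding M_def .
        ultimately show ?thesis unfolding \<eta>_def by linarith
      next
        case False
        then have "x \<in> Good" using x unfolding S_def by auto
        then have vx: "v x \<le> ereal (a - \<epsilon>/4)" unfolding Good_def by auto
        have vn: "v x \<noteq> -\<infinity>" using vp(1) unfolding proper_fun_def by auto
        have "a - \<epsilon>/8 < real_of_ereal (u x)" using gx by linarith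
        then have "zeta_ext \<zeta> (u x) < \<zeta> (a - \<epsilon>/8)" unfolding zu by (rule zeta_strict[OF assms(2)])
        moreover have "\<zeta> (a - \<epsilon>/4) \<le> zeta_ext \<zeta> (v x)" by (rule zeta_le[OF assms(2) vx vn])
        ultimately show ?thesis unfolding \<eta>_def by linarith
      qed
    qed
  qed
qed

theorem lemma3p8:
  fixes p :: real and \<zeta> :: "real \<Rightarrow> real"
    and uk :: "nat \<Rightarrow> 'a::euclidean_space \<Rightarrow> ereal" and u :: "'a \<Rightarrow> ereal" and x0 :: 'a
  assumes "1 \<le> p"
    and "\<zeta> \<in> M_p p (DIM('a) - 1)"
    and "\<And>k. uk k \<in> Conv_coe_n"
    and "u \<in> Conv_coe_n"
    and "(\<lambda>k. delta_zeta \<zeta> p (uk k) u) \<longlonglongrightarrow> 0"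
    and "x0 \<in> interior (edom u)"
  shows "(\<lambda>k. uk k x0) \<longlonglongrightarrow> u x0"
proof -
  define a where "a = real_of_ereal (u x0)"
  have x0d: "x0 \<in> edom u" using assms(6) interior_subset by blast
  have ua: "u x0 = ereal a" unfolding a_def by (rule edom_finite[OF conv_props(1)[OF assms(4)] x0d])
  show ?thesis
  proof (rule order_tendstoI)
    fix y assume y: "y < u x0"
    show "eventually (\<lambda>k. y < uk k x0) sequentially"
    proof (cases y)
      case MInf
      have "uk k x0 \<noteq> -\<infinity>" for k using conv_props(1)[OF assms(3)[of k]] unfolding proper_fun_def by auto
      then show ?thesis using MInf by simp
    next
      case PInf then show ?thesis using y by simp
    next
      case (real b)
      then have ba: "b < a" using y ua by simp
      obtain m where m: "m > 0" "\<forall>v. v \<in> Conv_coe_n \<longrightarrow> v x0 \<le> ereal (real_of_ereal (u x0) - (a - b)) \<longrightarrow>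
            ennreal m \<le> Iz \<zeta> p v u"
        using case_down[OF assms(1,2,4,6), of "a - b"] ba by auto
      show ?thesis
      proof (rule eventually_mono[OF delta_small[OF assms(5,1) m(1)]])
        fix k assume lt: "Iz \<zeta> p (uk k) u < ennreal m"
        show "y < uk k x0"
        proof (rule ccontr)
          assume "\<not> y < uk k x0"
          then have "uk k x0 \<le> ereal (real_of_ereal (u x0) - (a - b))" using real unfolding a_def by simp
          then have "ennreal m \<le> Iz \<zeta> p (uk k) u" using m(2) assms(3) by blast
          then show False using lt by simp
        qed
      qed
    qed
  next
    fix y assume y: "u x0 < y"
    have up: "eventually (\<lambda>k. uk k x0 < ereal b) sequentially" if ba: "a < b" for b
    proof -
      obtain m where m: "m > 0" "\<forall>v. v \<in> Conv_coe_n \<longrightarrow> ereal (real_of_ereal (u x0) + (b - a)) \<le> v x0 \<longrightarrow>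
            ennreal m \<le> Iz \<zeta> p v u"
        using case_up[OF assms(1,2,4,6), of "b - a"] ba by auto
      show ?thesis
      proof (rule eventually_mono[OF delta_small[OF assms(5,1) m(1)]])
        fix k assume lt: "Iz \<zeta> p (uk k) u < ennreal m"
        show "uk k x0 < ereal b"
        proof (rule ccontr)
          assume "\<not> uk k x0 < ereal b"
          then have "ereal (real_of_ereal (u x0) + (b - a)) \<le> uk k x0" unfolding a_def by simp
          then have "ennreal m \<le> Iz \<zeta> p (uk k) u" using m(2) assms(3) by blast
          then show False using lt by simp
        qed
      qed
    qed
    show "eventually (\<lambda>k. uk k x0 < y) sequentially"
    proof (cases y)
      case PInf
      show ?thesis using up[of "a + 1"] by (rule eventually_mono) (auto simp: PInf)
    next
      case MInf then show ?thesis using y by simp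
    next
      case (real b)
      then have ba: "a < b" using y ua by simp
      show ?thesis using up[OF ba] real by simp
    qed
  qed
qed

end
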